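(* In the approximation setting, let $k\in\mathbb N$ and let $\psi\in C_c^\infty(\Omega)$ be nonnegative. Then there is a constant $C(k,\|\psi\|_{W^{1,\infty}(\Omega)})$, independent of $n$ and of $\varepsilon\in(0,1)$, such that $$\int_{\Omega_T}\big|A(t,x,\nabla_xu^n)\cdot\nabla_xu^n\,T''_{k,\varepsilon}(u^n)\,\psi(x)\big|\,dx\,dt\le C(k,\|\psi\|_{W^{1,\infty}(\Omega)}).$$
   Context: Standing setting: $\Omega\subset\mathbb{R}^d$ bounded Lipschitz, $\Omega_T=(0,T)\times\Omega$; $p$ measurable, log-Hölder continuous in space uniformly in time, $1<p_{\min}\le p\le p_{\max}<\infty$; $p'=p/(p-1)$. $A$ satisfies (A1) Carathéodory; (A2) $|\xi|^{p(t,x)}+|A(t,x,\xi)|^{p'(t,x)}\le c\,A(t,x,\xi)\cdot\xi+h(t,x)$ with $c>0$, $h\in L^\infty(\Omega_T)$; (A3) monotonicity $(A(t,x,\xi)-A(t,x,\eta))\cdot(\xi-\eta)\ge0$; (A4) $A(t,x,0)=0$. Truncations: $T_k(z)=z$ for $|z|\le k$, $=k\,\mathrm{sign}(z)$ otherwise; $G_k(s)=\int_0^sT_k$. Smoothed truncation: for $k>0$, $\varepsilon\in(0,1)$, $T_{k,\varepsilon}\in C^2(\mathbb R)$ is any function with $T_{k,\varepsilon}(z)=z$ for $|z|\le k$, $T_{k,\varepsilon}(z)=\mathrm{sign}(z)(k+\varepsilon/2)$ for $|z|\ge k+\varepsilon$, $0\le T'_{k,\varepsilon}\le1$, concave on $\mathbb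 R_+$, convex on $\mathbb R_-$, and $|T''_{k,\varepsilon}|\le C\varepsilon^{-1}$. Approximation setting: $f^n\in L^\infty(\Omega_T)$, $u_0^n\in L^\infty(\Omega)$ with $\sup_n(\|u_0^n\|_{L^1(\Omega)}+\|f^n\|_{L^1(\Omega_T)})<\infty$; $u^n\in L^1(0,T;W^{1,1}_0(\Omega))\cap L^\infty(0,T;L^2(\Omega))$ with $\nabla_xu^n\in L^{p(t,x)}$, $A(t,x,\nabla_xu^n)\in L^{p'(t,x)}$, satisfying $-\int_{\Omega_T}u^n\partial_t\varphi-\int_\Omega u_0^n\varphi(0)+\int_{\Omega_T}A(t,x,\nabla_xu^n)\cdot\nabla_x\varphi=\int_{\Omega_T}f^n\varphi$ for all $\varphi\in C_c^\infty([0,T)\times\Omega)$ and the energy equality $\int_\Omega G_k(u^n(t))-G_k(u_0^n)\,dx=-\int_0^t\!\int_\Omega A(s,x,\nabla_xu^n)\cdot\nabla_xT_k(u^n)+\int_0^t\!\int_\Omega f^nT_k(u^n)$ for all $k>0$ and a.e. $t$. *)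

theory Defs
  imports "HOL-Analysis.Analysis"
begin

coinductive smooth_fun :: "('a::real_normed_vector \<Rightarrow> real) \<Rightarrow> bool" where
  "(\<forall>x. f differentiable (at x)) \<Longrightarrow>
   (\<forall>v. smooth_fun (\<lambda>x. frechet_derivative f (at x) v)) \<Longrightarrow> smooth_fun f"

definition test_fun :: "'a::euclidean_space set \<Rightarrow> ('a \<Rightarrow> real) \<Rightarrow> bool" where
  "test_fun \<Omega> \<phi> \<longleftrightarrow> smooth_fun \<phi> \<and>
     (\<exists>K. compact K \<and> K \<subseteq> \<Omega> \<and> (\<forall>x. x \<notin> K \<longrightarrow> \<phi> x = 0))"

text \<open>C_c^infinity([0,T) x Omega): (restrictions to [0,T) x Omega of) smooth functions on
  R x R^d vanishing outside a compact subset of (-infinity,T) x Omega.\<close>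
definition test_fun_T :: "real \<Rightarrow> 'a::euclidean_space set \<Rightarrow> (real \<times> 'a \<Rightarrow> real) \<Rightarrow> bool" where
  "test_fun_T T \<Omega> \<phi> \<longleftrightarrow> smooth_fun \<phi> \<and>
     (\<exists>K. compact K \<and> K \<subseteq> {..<T} \<times> \<Omega> \<and> (\<forall>z. z \<notin> K \<longrightarrow> \<phi> z = 0))"

definition grad :: "('a::euclidean_space \<Rightarrow> real) \<Rightarrow> 'a \<Rightarrow> 'a" where
  "grad \<phi> x = (\<Sum>b\<in>Basis. frechet_derivative \<phi> (at x) b *\<^sub>R b)"

definition grad_x :: "(real \<times> 'a::euclidean_space \<Rightarrow> real) \<Rightarrow> real \<times> 'a \<Rightarrow> 'a" where
  "grad_x \<phi> z = (\<Sum>b\<in>Basis. frechet_derivative \<phi> (at z) (0, b) *\<^sub>R b)"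

definition dt :: "(real \<times> 'a::euclidean_space \<Rightarrow> real) \<Rightarrow> real \<times> 'a \<Rightarrow> real" where
  "dt \<phi> z = frechet_derivative \<phi> (at z) (1, 0)"

definition W1inf_norm :: "('a::euclidean_space \<Rightarrow> real) \<Rightarrow> real" where
  "W1inf_norm \<psi> = (SUP x. \<bar>\<psi> x\<bar>) + (SUP x. norm (grad \<psi> x))"

definition weak_grad :: "'a::euclidean_space set \<Rightarrow> ('a \<Rightarrow> real) \<Rightarrow> ('a \<Rightarrow> 'a) \<Rightarrow> bool" where
  "weak_grad \<Omega> v G \<longleftrightarrow> set_integrable lebesgue \<Omega> v \<and> set_integrable lebesgue \<Omega> G \<and>
     (\<forall>\<phi>. test_fun \<Omega> \<phi> \<longrightarrow>
        (LINT x:\<Omega>|lebesgue. v x *\<^sub>R grad \<phi> x) = - (LINT x:\<Omega>|lebesgue. \<phi> x *\<^sub>R G x))"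

definition W011 :: "'a::euclidean_space set \<Rightarrow> ('a \<Rightarrow> real) \<Rightarrow> ('a \<Rightarrow> 'a) \<Rightarrow> bool" where
  "W011 \<Omega> v G \<longleftrightarrow> weak_grad \<Omega> v G \<and>
     (\<exists>\<phi>::nat \<Rightarrow> 'a \<Rightarrow> real. (\<forall>j. test_fun \<Omega> (\<phi> j)) \<and>
        ((\<lambda>j. (LINT x:\<Omega>|lebesgue. \<bar>\<phi> j x - v x\<bar>) + (LINT x:\<Omega>|lebesgue. norm (grad (\<phi> j) x - G x)))
           \<longlonglongrightarrow> 0))"

text \<open>Variable exponent Lebesgue space L^{q(z)}(S) (q bounded): measurable with finite modular.\<close>
definition var_Lp :: "('b::euclidean_space) set \<Rightarrow> ('b \<Rightarrow> real) \<Rightarrow> ('b \<Rightarrow> 'c::real_normed_vector) \<Rightarrow> bool" where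
  "var_Lp S q g \<longleftrightarrow> g \<in> borel_measurable (lebesgue_on S) \<and>
     (\<integral>\<^sup>+ z\<in>S. ennreal (norm (g z) powr q z) \<partial>lebesgue) < \<infinity>"

definition Linf :: "('b::euclidean_space) set \<Rightarrow> ('b \<Rightarrow> real) \<Rightarrow> bool" where
  "Linf S g \<longleftrightarrow> g \<in> borel_measurable (lebesgue_on S) \<and>
     (\<exists>M. AE z in lebesgue. z \<in> S \<longrightarrow> \<bar>g z\<bar> \<le> M)"

text \<open>Bounded Lipschitz domain: open, bounded, locally the region below a Lipschitz graph.\<close>
definition bounded_lipschitz_domain :: "'a::euclidean_space set \<Rightarrow> bool" where
  "bounded_lipschitz_domain \<Omega> \<longleftrightarrow> open \<Omega> \<and> bounded \<Omega> \<and>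
     (\<forall>z\<in>frontier \<Omega>. \<exists>r>0. \<exists>e::'a. \<exists>g::'a \<Rightarrow> real. \<exists>L.
        norm e = 1 \<and> L-lipschitz_on UNIV g \<and> (\<forall>y. g y = g (y - (y \<bullet> e) *\<^sub>R e)) \<and>
        \<Omega> \<inter> ball z r = {y \<in> ball z r. y \<bullet> e < g y})"

definition OmegaT :: "real \<Rightarrow> 'a set \<Rightarrow> (real \<times> 'a) set" where
  "OmegaT T \<Omega> = {0<..<T} \<times> \<Omega>"

definition conj_exp :: "real \<Rightarrow> real" where
  "conj_exp q = q / (q - 1)"

text \<open>Standing assumptions: Omega, T, p (log-Hoelder in space uniformly in time, bounded
  away from 1 and infinity) and A satisfying (A1)-(A4) with constant c and h in L-infinity.\<close>
definition standing_setting ::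
  "'a::euclidean_space set \<Rightarrow> real \<Rightarrow> (real \<times> 'a \<Rightarrow> real) \<Rightarrow> (real \<times> 'a \<Rightarrow> 'a \<Rightarrow> 'a) \<Rightarrow> bool" where
  "standing_setting \<Omega> T p A \<longleftrightarrow>
     bounded_lipschitz_domain \<Omega> \<and> T > 0 \<and>
     p \<in> borel_measurable (lebesgue_on (OmegaT T \<Omega>)) \<and>
     (\<exists>pmin pmax. 1 < pmin \<and> (\<forall>z\<in>OmegaT T \<Omega>. pmin \<le> p z \<and> p z \<le> pmax)) \<and>
     (\<exists>L. \<forall>t x y. t \<in> {0<..<T} \<longrightarrow> x \<in> \<Omega> \<longrightarrow> y \<in> \<Omega> \<longrightarrow> x \<noteq> y \<longrightarrow>
        \<bar>p (t, x) - p (t, y)\<bar> \<le> L / ln (exp 1 + 1 / dist x y)) \<and>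
     \<comment> \<open>(A1) Caratheodory\<close>
     (\<forall>\<xi>. (\<lambda>z. A z \<xi>) \<in> borel_measurable (lebesgue_on (OmegaT T \<Omega>))) \<and>
     (AE z in lebesgue. z \<in> OmegaT T \<Omega> \<longrightarrow> continuous_on UNIV (A z)) \<and>
     \<comment> \<open>(A2) coercivity / growth\<close>
     (\<exists>c h. c > 0 \<and> Linf (OmegaT T \<Omega>) h \<and>
        (AE z in lebesgue. z \<in> OmegaT T \<Omega> \<longrightarrow>
           (\<forall>\<xi>. norm \<xi> powr p z + norm (A z \<xi>) powr conj_exp (p z) \<le> c * (A z \<xi> \<bullet> \<xi>) + h z))) \<and>
     \<comment> \<open>(A3) monotonicity\<close>
     (AE z in lebesgue. z \<in> OmegaT T \<Omega> \<longrightarrow> (\<forall>\<xi> \<eta>. (A z \<xi> - A z \<eta>) \<bullet> (\<xi> - \<eta>) \<ge> 0)) \<and>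
     \<comment> \<open>(A4)\<close>
     (AE z in lebesgue. z \<in> OmegaT T \<Omega> \<longrightarrow> A z 0 = 0)"

definition trunc :: "real \<Rightarrow> real \<Rightarrow> real" where
  "trunc k z = (if \<bar>z\<bar> \<le> k then z else k * sgn z)"

definition Gk :: "real \<Rightarrow> real \<Rightarrow> real" where
  "Gk k s = (LBINT r=0..ereal s. trunc k r)"

text \<open>Admissible smoothed truncations T_{k,eps}, with a fixed constant Cs in the bound
  on the second derivative.\<close>
definition smoothed_trunc :: "real \<Rightarrow> real \<Rightarrow> real \<Rightarrow> (real \<Rightarrow> real) set" where
  "smoothed_trunc Cs k \<epsilon> = {Tf.
     (\<forall>z. Tf differentiable (at z)) \<and> (\<forall>z. deriv Tf differentiable (at z)) \<and>
     continuous_on UNIV (deriv (deriv Tf)) \<and>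
     (\<forall>z. \<bar>z\<bar> \<le> k \<longrightarrow> Tf z = z) \<and>
     (\<forall>z. \<bar>z\<bar> \<ge> k + \<epsilon> \<longrightarrow> Tf z = sgn z * (k + \<epsilon> / 2)) \<and>
     (\<forall>z. 0 \<le> deriv Tf z \<and> deriv Tf z \<le> 1) \<and>
     concave_on {0..} Tf \<and> convex_on {..0} Tf \<and>
     (\<forall>z. \<bar>deriv (deriv Tf) z\<bar> \<le> Cs / \<epsilon>)}"

definition approx_setting ::
  "'a::euclidean_space set \<Rightarrow> real \<Rightarrow> (real \<times> 'a \<Rightarrow> real) \<Rightarrow> (real \<times> 'a \<Rightarrow> 'a \<Rightarrow> 'a) \<Rightarrow>
   (nat \<Rightarrow> real \<times> 'a \<Rightarrow> real) \<Rightarrow> (nat \<Rightarrow> 'a \<Rightarrow> real) \<Rightarrow>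
   (nat \<Rightarrow> real \<times> 'a \<Rightarrow> real) \<Rightarrow> (nat \<Rightarrow> real \<times> 'a \<Rightarrow> 'a) \<Rightarrow> bool" where
  "approx_setting \<Omega> T p A f u0 u Du \<longleftrightarrow>
     (\<forall>n. Linf (OmegaT T \<Omega>) (f n) \<and> Linf \<Omega> (u0 n)) \<and>
     (\<exists>B. \<forall>n. (\<integral>\<^sup>+ x\<in>\<Omega>. ennreal \<bar>u0 n x\<bar> \<partial>lebesgue) +
               (\<integral>\<^sup>+ z\<in>OmegaT T \<Omega>. ennreal \<bar>f n z\<bar> \<partial>lebesgue) \<le> ennreal B) \<and>
     (\<forall>n.
       \<comment> \<open>u^n in L^1(0,T;W^{1,1}_0(Omega)), Du^n its spatial weak gradient\<close>
       set_integrable lebesgue (OmegaT T \<Omega>) (u n) \<and>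
       set_integrable lebesgue (OmegaT T \<Omega>) (Du n) \<and>
       (AE t in lebesgue. t \<in> {0<..<T} \<longrightarrow> W011 \<Omega> (\<lambda>x. u n (t, x)) (\<lambda>x. Du n (t, x))) \<and>
       \<comment> \<open>u^n in L^infinity(0,T;L^2(Omega))\<close>
       (\<exists>M. AE t in lebesgue. t \<in> {0<..<T} \<longrightarrow>
          (\<integral>\<^sup>+ x\<in>\<Omega>. ennreal ((u n (t, x))\<^sup>2) \<partial>lebesgue) \<le> ennreal M) \<and>
       var_Lp (OmegaT T \<Omega>) p (Du n) \<and>
       var_Lp (OmegaT T \<Omega>) (\<lambda>z. conj_exp (p z)) (\<lambda>z. A z (Du n z)) \<and>
       \<comment> \<open>weak formulation\<close>
       (\<forall>\<phi>. test_fun_T T \<Omega> \<phi> \<longrightarrow>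
          - (LINT z:OmegaT T \<Omega>|lebesgue. u n z * dt \<phi> z)
          - (LINT x:\<Omega>|lebesgue. u0 n x * \<phi> (0, x))
          + (LINT z:OmegaT T \<Omega>|lebesgue. A z (Du n z) \<bullet> grad_x \<phi> z)
          = (LINT z:OmegaT T \<Omega>|lebesgue. f n z * \<phi> z)) \<and>
       \<comment> \<open>energy equality; grad T_k(u) = 1_{|u|<k} grad u\<close>
       (\<forall>k>0. AE t in lebesgue. t \<in> {0<..<T} \<longrightarrow>
          (LINT x:\<Omega>|lebesgue. Gk k (u n (t, x)) - Gk k (u0 n x))
          = - (LINT z:{0<..<t} \<times> \<Omega>|lebesgue.
                  A z (Du n z) \<bullet> (if \<bar>u n z\<bar> < k then Du n z else 0))
            + (LINT z:{0<..<t} \<times> \<Omega>|lebesgue. f n z * trunc k (u n z))))"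

end

theory Submission
  imports Defs
begin

lemma trunc_alt: "k \<ge> 0 \<Longrightarrow> trunc k r = max (-k) (min k r)"
  by (auto simp: trunc_def sgn_if)

lemma trunc_cont: "k \<ge> 0 \<Longrightarrow> continuous_on S (trunc k)"
proof -
  assume "k \<ge> 0"
  then have "trunc k = (\<lambda>r. max (-k) (min k r))" using trunc_alt by auto
  then show ?thesis by (simp add: continuous_intros)
qed

lemma Gk_deriv: assumes "k \<ge> 0" shows "(Gk k has_real_derivative trunc k x) (at x)"
proof -
  define m where "m = \<bar>x\<bar> + 1"
  have "((\<lambda>u. LBINT y=ereal 0..ereal u. trunc k y) has_vector_derivative (trunc k x)) (at x within {-m..m})"
    using interval_integral_FTC2[of "-m" 0 m "trunc k" x] by (auto simp: m_def trunc_cont assms)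
  then have "((\<lambda>u. LBINT y=0..ereal u. trunc k y) has_vector_derivative (trunc k x)) (at x within {-m..m})"
    by (simp add: zero_ereal_def)
  then have "(Gk k has_vector_derivative (trunc k x)) (at x within {-m..m})"
    unfolding Gk_def[abs_def] .
  moreover have "x \<in> interior {-m..m}" by (auto simp: m_def)
  ultimately have "(Gk k has_vector_derivative (trunc k x)) (at x)"
    by (metis at_within_interior)
  then show ?thesis by (simp add: has_real_derivative_iff_has_vector_derivative)
qed

lemma mvt_bound:
  fixes D d :: "real \<Rightarrow> real"
  assumes D0: "D 0 = 0" and der: "\<And>x. (D has_real_derivative d x) (at x)"
    and pos: "\<And>x. x \<ge> 0 \<Longrightarrow> 0 \<le> d x \<and> d x \<le> L"
    and neg: "\<And>x. x \<le> 0 \<Longrightarrow> -L \<le> d x \<and> d x \<le> 0"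
  shows "0 \<le> D s \<and> D s \<le> L * \<bar>s\<bar>"
proof (cases "s = 0")
  case True then show ?thesis using D0 pos[of 0] by auto
next
  case False
  show ?thesis
  proof (cases "s > 0")
    case True
    obtain z where "z > 0" "z < s" "D s - D 0 = (s - 0) * d z"
      using MVT2[of 0 s D d] True der by auto
    then show ?thesis using pos[of z] True D0 by (auto intro: mult_left_mono mult_nonneg_nonneg simp: mult.commute)
  next
    case False
    then have s: "s < 0" using \<open>s \<noteq> 0\<close> by auto
    obtain z where "z > s" "z < 0" "D 0 - D s = (0 - s) * d z"
      using MVT2[of s 0 D d] s der by auto
    then have "D s = s * d z" using D0 by auto
    moreover have "-L \<le> d z" "d z \<le> 0" using neg[of z] \<open>z < 0\<close> by auto
    moreover have "0 \<le> (-s)*(-d z)" using s \<open>d z \<le> 0\<close> by (intro mult_nonneg_nonneg) auto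
    moreover have "(-s)*(-d z) \<le> (-s) * L" using s \<open>-L \<le> d z\<close> by (intro mult_left_mono) auto
    ultimately show ?thesis using s by (auto simp: mult.commute)
  qed
qed

lemma Gk0: "Gk k 0 = 0"
  by (simp add: Gk_def zero_ereal_def)

lemma Gk_diff_bound:
  assumes "0 \<le> a" "a \<le> b"
  shows "0 \<le> Gk b s - Gk a s \<and> Gk b s - Gk a s \<le> (b - a) * \<bar>s\<bar>"
proof (rule mvt_bound[where D="\<lambda>s. Gk b s - Gk a s" and d="\<lambda>x. trunc b x - trunc a x"])
  show "Gk b 0 - Gk a 0 = 0" by (simp add: Gk0)
  fix x
  show "((\<lambda>s. Gk b s - Gk a s) has_real_derivative trunc b x - trunc a x) (at x)"
    using assms by (intro derivative_intros Gk_deriv) auto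
  show "x \<ge> 0 \<Longrightarrow> 0 \<le> trunc b x - trunc a x \<and> trunc b x - trunc a x \<le> b - a"
    using assms by (auto simp: trunc_alt)
  show "x \<le> 0 \<Longrightarrow> -(b-a) \<le> trunc b x - trunc a x \<and> trunc b x - trunc a x \<le> 0"
    using assms by (auto simp: trunc_alt)
qed

lemma Gk_bound:
  assumes "0 \<le> k"
  shows "0 \<le> Gk k s \<and> Gk k s \<le> k * \<bar>s\<bar>"
proof -
  have "trunc 0 = (\<lambda>r. 0)" by (auto simp: trunc_def)
  then have "Gk 0 s = 0" by (simp add: Gk_def)
  then show ?thesis using Gk_diff_bound[of 0 k s] assms by simp
qed

lemma Gk_cont: "0 \<le> k \<Longrightarrow> continuous_on UNIV (Gk k)"
  using Gk_deriv by (meson DERIV_isCont continuous_at_imp_continuous_on)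

lemma dd_local:
  fixes f g :: "real \<Rightarrow> real"
  assumes "open S" "z \<in> S" "\<And>y. y \<in> S \<Longrightarrow> f y = g y"
  shows "deriv (deriv f) z = deriv (deriv g) z"
proof -
  have "deriv f y = deriv g y" if "y \<in> S" for y
  proof (rule deriv_cong_ev)
    show "\<forall>\<^sub>F x in nhds y. f x = g x" using assms that by (auto simp: eventually_nhds)
  qed simp
  then have "\<forall>\<^sub>F y in nhds z. deriv f y = deriv g y" using assms by (auto simp: eventually_nhds)
  then show ?thesis by (rule deriv_cong_ev) simp
qed

lemma deriv_const': "deriv (\<lambda>x::real. c) = (\<lambda>x. 0)"
  by (rule ext, rule DERIV_imp_deriv, rule DERIV_const)

lemma dd_id: "deriv (deriv (\<lambda>x::real. x)) z = 0"
proof -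
  have "deriv (\<lambda>x::real. x) = (\<lambda>x. 1)" by (rule ext, rule DERIV_imp_deriv, rule DERIV_ident)
  then show ?thesis by (simp add: deriv_const')
qed

lemma Tke_props:
  assumes "Tke \<in> smoothed_trunc Cs k \<epsilon>" "0 < \<epsilon>" "0 \<le> k"
  shows "\<bar>deriv (deriv Tke) z\<bar> \<le> Cs / \<epsilon>"
    and "\<bar>z\<bar> < k \<or> \<bar>z\<bar> > k + \<epsilon> \<Longrightarrow> deriv (deriv Tke) z = 0"
proof -
  show "\<bar>deriv (deriv Tke) z\<bar> \<le> Cs / \<epsilon>" using assms by (simp add: smoothed_trunc_def)
  assume z: "\<bar>z\<bar> < k \<or> \<bar>z\<bar> > k + \<epsilon>"
  have id: "\<And>y. \<bar>y\<bar> \<le> k \<Longrightarrow> Tke y = y" and out: "\<And>y. \<bar>y\<bar> \<ge> k + \<epsilon> \<Longrightarrow> Tke y = sgn y * (k + \<epsilon>/2)"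
    using assms by (auto simp: smoothed_trunc_def)
  consider "\<bar>z\<bar> < k" | "z > k + \<epsilon>" | "z < -(k + \<epsilon>)" using z by linarith
  then show "deriv (deriv Tke) z = 0"
  proof cases
    case 1
    have "deriv (deriv Tke) z = deriv (deriv (\<lambda>x. x)) z"
      by (rule dd_local[of "{-k<..<k}"]) (use 1 id in auto)
    then show ?thesis by (simp add: dd_id)
  next
    case 2
    have "deriv (deriv Tke) z = deriv (deriv (\<lambda>x. k + \<epsilon>/2)) z"
      by (rule dd_local[of "{y. y > k + \<epsilon>}"]) (use 2 out assms in \<open>auto intro: open_Collect_less continuous_intros\<close>)
    then show ?thesis by (simp add: deriv_const')
  next
    case 3
    have "deriv (deriv Tke) z = deriv (deriv (\<lambda>x. -(k + \<epsilon>/2))) z"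
      by (rule dd_local[of "{y. y < -(k + \<epsilon>)}"]) (use 3 out assms in \<open>auto intro: open_Collect_less continuous_intros\<close>)
    then show ?thesis by (simp add: deriv_const')
  qed
qed

lemma bounded_cs:
  fixes g :: "'a::euclidean_space \<Rightarrow> 'b::real_normed_vector"
  assumes "continuous_on UNIV g" "compact K" "\<And>x. x \<notin> K \<Longrightarrow> g x = 0"
  shows "\<exists>B. \<forall>x. norm (g x) \<le> B"
proof -
  have "compact (g ` K)" using assms by (meson compact_continuous_image continuous_on_subset subset_UNIV)
  then obtain B where B: "\<And>y. y \<in> g ` K \<Longrightarrow> norm y \<le> B" using compact_imp_bounded bounded_iff by metis
  show ?thesis
  proof (intro exI allI)
    fix x show "norm (g x) \<le> max B 0" using B[of "g x"] assms(3)[of x] by (cases "x \<in> K") auto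
  qed
qed

lemma smooth_fun_diff:
  assumes "smooth_fun f"
  shows "\<forall>x. f differentiable (at x)" "\<And>v. smooth_fun (\<lambda>x. frechet_derivative f (at x) v)"
  using assms by (auto elim: smooth_fun.cases)

lemma smooth_cont: "smooth_fun f \<Longrightarrow> continuous_on UNIV f"
  using smooth_fun_diff(1) by (meson continuous_at_imp_continuous_on differentiable_imp_continuous_within)

lemma test_fun_bounds:
  fixes \<psi> :: "'a::euclidean_space \<Rightarrow> real"
  assumes "test_fun \<Omega> \<psi>"
  shows "\<bar>\<psi> x\<bar> \<le> W1inf_norm \<psi>"
proof -
  obtain K where K: "compact K" "\<And>x. x \<notin> K \<Longrightarrow> \<psi> x = 0" and sm: "smooth_fun \<psi>"
    using assms unfolding test_fun_def by blast
  obtain B1 where B1: "\<And>x. norm (\<psi> x) \<le> B1"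
    using bounded_cs[OF smooth_cont[OF sm] K] by blast
  have dz: "frechet_derivative \<psi> (at x) b = 0" if "x \<notin> K" for x b
  proof -
    have "open (- K)" using K(1) compact_imp_closed by blast
    have "((\<lambda>y. 0::real) has_derivative (\<lambda>h. 0)) (at x)" by simp
    then have "(\<psi> has_derivative (\<lambda>h. 0)) (at x)"
      by (rule has_derivative_transform_within_open[OF _ \<open>open (-K)\<close>]) (use that K in auto)
    then have "(\<lambda>h. 0) = frechet_derivative \<psi> (at x)" by (rule frechet_derivative_at)
    then show ?thesis by (metis)
  qed
  have gc: "continuous_on UNIV (grad \<psi>)"
    unfolding grad_def[abs_def]
    by (intro continuous_intros smooth_cont smooth_fun_diff(2)[OF sm])
  have gz: "grad \<psi> x = 0" if "x \<notin> K" for x using dz[OF that] by (simp add: grad_def)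
  obtain B2 where B2: "\<And>x. norm (grad \<psi> x) \<le> B2"
    using bounded_cs[OF gc K(1) gz] by blast
  have "\<bar>\<psi> x\<bar> \<le> (SUP x. \<bar>\<psi> x\<bar>)"
    by (rule cSUP_upper) (use B1 in \<open>auto intro!: bdd_aboveI2\<close>)
  moreover have "norm (grad \<psi> x) \<le> (SUP x. norm (grad \<psi> x))"
    by (rule cSUP_upper) (use B2 in \<open>auto intro!: bdd_aboveI2\<close>)
  ultimately show ?thesis unfolding W1inf_norm_def
    by (smt (verit) norm_ge_zero)
qed

lemma open_leb: "open S \<Longrightarrow> S \<in> sets lebesgue"
  by (metis borel_open sets_completionI_sets sets_lborel)

lemma si_iff:
  fixes f :: "'a::euclidean_space \<Rightarrow> 'b::{banach, second_countable_topology}"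
  assumes "S \<in> sets lebesgue"
  shows "set_integrable lebesgue S f \<longleftrightarrow> integrable (lebesgue_on S) f"
  unfolding set_integrable_def using assms by (subst integrable_restrict_space) auto

lemma sl_eq:
  fixes f :: "'a::euclidean_space \<Rightarrow> 'b::{banach, second_countable_topology}"
  assumes "S \<in> sets lebesgue"
  shows "(LINT x:S|lebesgue. f x) = integral\<^sup>L (lebesgue_on S) f"
  unfolding set_lebesgue_integral_def using assms by (subst integral_restrict_space) auto

lemma nn_eq:
  assumes "S \<in> sets lebesgue"
  shows "(\<integral>\<^sup>+ x\<in>S. f x \<partial>lebesgue) = (\<integral>\<^sup>+ x. f x \<partial>lebesgue_on S)"
  using assms by (subst nn_integral_restrict_space) auto

lemma young_simple:
  fixes a b q :: real
  assumes "0 \<le> a" "0 \<le> b" "1 < q"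
  shows "a * b \<le> a powr q + b powr (q / (q - 1))"
proof (cases "a = 0 \<or> b = 0")
  case True then show ?thesis by auto
next
  case False
  then have a: "a > 0" and b: "b > 0" using assms by auto
  show ?thesis
  proof (cases "a \<le> b powr (1 / (q - 1))")
    case True
    have "a * b \<le> b powr (1 / (q - 1)) * b" using True b by (simp add: mult_right_mono)
    also have "\<dots> = b powr (1 / (q - 1) + 1)" using b by (simp add: powr_add)
    also have "1 / (q - 1) + 1 = q / (q - 1)" using assms by (simp add: field_simps)
    finally show ?thesis using a by (smt (verit) powr_ge_zero)
  next
    case False
    then have "b powr (1 / (q - 1)) < a" by simp
    then have "(b powr (1 / (q - 1))) powr (q - 1) < a powr (q - 1)"
      using assms b by (intro powr_less_mono2) auto
    also have "(b powr (1 / (q - 1))) powr (q - 1) = b" using assms b by (simp add: powr_powr)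
    finally have "b < a powr (q - 1)" .
    then have "a * b \<le> a * a powr (q - 1)" using a by simp
    also have "\<dots> = a powr q" using a by (simp add: powr_mult_base)
    finally show ?thesis using b by (smt (verit) powr_ge_zero)
  qed
qed

lemma good_point:
  assumes "AE t in lebesgue. t \<in> {0<..<T} \<longrightarrow> P t" "0 \<le> c" "c < (T::real)"
  shows "\<exists>t. c < t \<and> t < T \<and> P t"
proof (rule ccontr)
  assume "\<not> ?thesis"
  then have "AE t in lebesgue. t \<notin> {c<..<T}" using assms(1,2) by (rule_tac AE_mp[OF assms(1)]) auto
  then have "emeasure lebesgue {c<..<T} = 0"
    by (subst (asm) AE_iff_measurable[of "{c<..<T}"]) auto
  moreover have "emeasure lebesgue {c<..<T} = ennreal (T - c)" using assms(3) by simp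
  ultimately show False using assms by simp
qed

lemma exhaust:
  fixes h :: "real \<times> 'a::euclidean_space \<Rightarrow> ennreal"
  assumes T: "T > 0" and Om: "open \<Omega>"
   and hm: "h \<in> borel_measurable (lebesgue_on ({0<..<T} \<times> \<Omega>))"
   and good: "AE t in lebesgue. t \<in> {0<..<T} \<longrightarrow> P t"
   and bnd: "\<And>t. 0<t \<Longrightarrow> t<T \<Longrightarrow> P t \<Longrightarrow> (\<integral>\<^sup>+ z. h z * indicator ({0<..<t}\<times>\<Omega>) z \<partial>lebesgue_on ({0<..<T}\<times>\<Omega>)) \<le> X"
  shows "(\<integral>\<^sup>+ z. h z \<partial>lebesgue_on ({0<..<T}\<times>\<Omega>)) \<le> X"
proof -
  let ?L = "lebesgue_on ({0<..<T}\<times>\<Omega>)"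
  define tj where "tj j = T - T / (real j + 2)" for j :: nat
  define F where "F j z = h z * indicator ({0<..<tj j}\<times>\<Omega>) z" for j z
  have tj_mono: "tj i \<le> tj j" if "i \<le> j" for i j
    unfolding tj_def using T that by (simp add: frac_le)
  have tj_pos: "0 \<le> tj j" "tj j < T" for j
    unfolding tj_def using T by (auto simp: field_simps)
  have inc: "incseq F"
    unfolding incseq_def le_fun_def F_def
    by (auto intro!: mult_left_mono simp: indicator_def dest: tj_mono)
  have meas: "F j \<in> borel_measurable ?L" for j
    unfolding F_def using Om
    by (intro borel_measurable_times_ennreal hm borel_measurable_indicator measurable_restrict_space1)
       (auto intro!: open_leb open_Times)
  have sup: "(SUP j. F j z) = h z" if "z \<in> space ?L" for z
  proof (rule antisym)
    show "(SUP j. F j z) \<le> h z" by (rule SUP_least) (auto simp: F_def indicator_def)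
    from that have z: "0 < fst z" "fst z < T" "snd z \<in> \<Omega>" by (auto simp: space_restrict_space mem_Times_iff)
    define d where "d = T - fst z"
    have d: "d > 0" using z by (simp add: d_def)
    obtain j :: nat where j: "T / d < real j" using reals_Archimedean2 by blast
    have "T / (real j + 2) < T / (T / d)"
      using T d j by (intro divide_strict_left_mono) (auto intro: divide_pos_pos)
    then have "fst z < tj j" using T d by (simp add: tj_def d_def)
    then have "F j z = h z" using z by (auto simp: F_def mem_Times_iff indicator_def)
    then show "h z \<le> (SUP j. F j z)" by (metis SUP_upper UNIV_I)
  qed
  have "(\<integral>\<^sup>+ z. h z \<partial>?L) = (\<integral>\<^sup>+ z. (SUP j. F j z) \<partial>?L)"
    by (rule nn_integral_cong) (simp add: sup)
  also have "\<dots> = (SUP j. \<integral>\<^sup>+ z. F j z \<partial>?L)"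
    by (rule nn_integral_monotone_convergence_SUP[OF inc meas])
  also have "\<dots> \<le> X"
  proof (rule SUP_least)
    fix j
    obtain t where t: "tj j < t" "t < T" "P t" using good_point[OF good tj_pos] by blast
    then have t0: "0 < t" using tj_pos[of j] by linarith
    have "(\<integral>\<^sup>+ z. F j z \<partial>?L) \<le> (\<integral>\<^sup>+ z. h z * indicator ({0<..<t}\<times>\<Omega>) z \<partial>?L)"
      unfolding F_def using t by (intro nn_integral_mono) (auto intro!: mult_left_mono simp: indicator_def mem_Times_iff)
    also have "\<dots> \<le> X" using bnd[OF t0 t(2) t(3)] .
    finally show "(\<integral>\<^sup>+ z. F j z \<partial>?L) \<le> X" .
  qed
  finally show ?thesis .
qed

lemma sub_int:
  fixes \<phi> :: "'a::euclidean_space \<Rightarrow> real"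
  assumes "S \<in> sets lebesgue" "U \<in> sets lebesgue" "S \<subseteq> U" "integrable (lebesgue_on U) \<phi>"
  shows "integrable (lebesgue_on S) \<phi>"
  using assms set_integrable_subset[of lebesgue U \<phi> S] by (simp add: si_iff)

lemma sub_le:
  fixes \<phi> :: "'a::euclidean_space \<Rightarrow> real"
  assumes "S \<in> sets lebesgue" "U \<in> sets lebesgue" "S \<subseteq> U" "integrable (lebesgue_on U) \<phi>"
    "\<And>x. 0 \<le> \<phi> x"
  shows "integral\<^sup>L (lebesgue_on S) \<phi> \<le> integral\<^sup>L (lebesgue_on U) \<phi>"
proof -
  have "set_integrable lebesgue U \<phi>" "set_integrable lebesgue S \<phi>"
    using assms sub_int[OF assms(1-4)] by (auto simp: si_iff)
  then show ?thesis
    using assms unfolding sl_eq[OF assms(1), symmetric] sl_eq[OF assms(2), symmetric]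
    unfolding set_lebesgue_integral_def set_integrable_def
    by (intro integral_mono) (auto simp: indicator_def)
qed

lemma trunc_meas[measurable]: "0 \<le> k \<Longrightarrow> trunc k \<in> borel_measurable borel"
  by (intro borel_measurable_continuous_onI trunc_cont)

lemma Gk_meas[measurable]: "0 \<le> k \<Longrightarrow> Gk k \<in> borel_measurable borel"
  by (intro borel_measurable_continuous_onI Gk_cont)

lemma trunc_diff: "0 \<le> a \<Longrightarrow> a \<le> b \<Longrightarrow> \<bar>trunc b s - trunc a s\<bar> \<le> b - a"
  by (auto simp: trunc_alt)

lemma int_Gk:
  fixes v :: "'a::euclidean_space \<Rightarrow> real"
  assumes "integrable M v" "0 \<le> k"
  shows "integrable M (\<lambda>x. Gk k (v x))"
proof (rule Bochner_Integration.integrable_bound)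
  show "integrable M (\<lambda>x. k * v x)" using assms by simp
  show "(\<lambda>x. Gk k (v x)) \<in> borel_measurable M"
    using assms by (intro measurable_compose[OF _ Gk_meas]) auto
  show "AE x in M. norm (Gk k (v x)) \<le> norm (k * v x)"
    using Gk_bound[OF assms(2)] assms by (auto simp: abs_mult)
qed

lemma meas_cut1:
  fixes g u :: "'b \<Rightarrow> real"
  assumes [measurable]: "g \<in> borel_measurable M" "u \<in> borel_measurable M"
  shows "(\<lambda>z. if \<bar>u z\<bar> < k then g z else 0) \<in> borel_measurable M"
  by measurable

lemma meas_cut2:
  fixes g u :: "'b \<Rightarrow> real"
  assumes [measurable]: "g \<in> borel_measurable M" "u \<in> borel_measurable M"
  shows "(\<lambda>z. ennreal (if a \<le> \<bar>u z\<bar> \<and> \<bar>u z\<bar> < b then g z else 0)) \<in> borel_measurable M"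
  by measurable

lemma meas_ft:
  fixes f u :: "'b \<Rightarrow> real"
  assumes [measurable]: "f \<in> borel_measurable M" "u \<in> borel_measurable M" and "0 \<le> k"
  shows "(\<lambda>z. f z * trunc k (u z)) \<in> borel_measurable M"
  using assms(3) by measurable

lemma key_slab:
  fixes \<Omega> :: "'a::euclidean_space set" and g u f :: "real \<times> 'a \<Rightarrow> real" and u0 :: "'a \<Rightarrow> real"
  assumes T: "T > 0" and Om: "open \<Omega>"
    and gi: "integrable (lebesgue_on ({0<..<T}\<times>\<Omega>)) g"
    and gnn: "AE z in lebesgue_on ({0<..<T}\<times>\<Omega>). 0 \<le> g z"
    and ui: "integrable (lebesgue_on ({0<..<T}\<times>\<Omega>)) u"
    and fi: "integrable (lebesgue_on ({0<..<T}\<times>\<Omega>)) f"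
    and u0i: "integrable (lebesgue_on \<Omega>) u0"
    and Bb: "integral\<^sup>L (lebesgue_on \<Omega>) (\<lambda>x. \<bar>u0 x\<bar>) + integral\<^sup>L (lebesgue_on ({0<..<T}\<times>\<Omega>)) (\<lambda>z. \<bar>f z\<bar>) \<le> B"
    and uti: "AE t in lebesgue. t \<in> {0<..<T} \<longrightarrow> integrable (lebesgue_on \<Omega>) (\<lambda>x. u (t, x))"
    and en: "\<And>k. k > 0 \<Longrightarrow> AE t in lebesgue. t \<in> {0<..<T} \<longrightarrow>
          (LINT x:\<Omega>|lebesgue. Gk k (u (t, x)) - Gk k (u0 x))
          = - (LINT z:{0<..<t} \<times> \<Omega>|lebesgue. (if \<bar>u z\<bar> < k then g z else 0))
            + (LINT z:{0<..<t} \<times> \<Omega>|lebesgue. f z * trunc k (u z))"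
    and ab: "0 < a" "a \<le> b"
  shows "(\<integral>\<^sup>+ z. ennreal (if a \<le> \<bar>u z\<bar> \<and> \<bar>u z\<bar> < b then g z else 0) \<partial>lebesgue_on ({0<..<T}\<times>\<Omega>))
          \<le> ennreal ((b - a) * B)"
proof -
  let ?OT = "{0<..<T}\<times>\<Omega>"
  let ?L = "lebesgue_on ?OT"
  let ?LO = "lebesgue_on \<Omega>"
  have OTs: "?OT \<in> sets lebesgue" using Om by (intro open_leb open_Times) auto
  have Os: "\<Omega> \<in> sets lebesgue" using Om by (intro open_leb)
  have gm: "g \<in> borel_measurable ?L" and um: "u \<in> borel_measurable ?L"
    using gi ui by auto
  define P where "P t \<longleftrightarrow> integrable ?LO (\<lambda>x. u (t, x)) \<and>
     (\<forall>k\<in>{a,b}. (LINT x:\<Omega>|lebesgue. Gk k (u (t, x)) - Gk k (u0 x))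
          = - (LINT z:{0<..<t} \<times> \<Omega>|lebesgue. (if \<bar>u z\<bar> < k then g z else 0))
            + (LINT z:{0<..<t} \<times> \<Omega>|lebesgue. f z * trunc k (u z)))" for t
  have good: "AE t in lebesgue. t \<in> {0<..<T} \<longrightarrow> P t"
  proof -
    have b0: "b > 0" using ab by simp
    show ?thesis using uti en[OF ab(1)] en[OF b0] unfolding P_def by eventually_elim auto
  qed
  show ?thesis
  proof (rule exhaust[OF T Om _ good])
    show "(\<lambda>z. ennreal (if a \<le> \<bar>u z\<bar> \<and> \<bar>u z\<bar> < b then g z else 0)) \<in> borel_measurable ?L"
      by (rule meas_cut2[OF gm um])
  next
    fix t assume t: "0 < t" "t < T" "P t"
    let ?St = "{0<..<t}\<times>\<Omega>"
    let ?LS = "lebesgue_on ?St"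
    have Sts: "?St \<in> sets lebesgue" using Om by (intro open_leb open_Times) auto
    have sub: "?St \<subseteq> ?OT" using t by auto
    define hr where "hr z = (if a \<le> \<bar>u z\<bar> \<and> \<bar>u z\<bar> < b then g z else 0)" for z
    have "(\<integral>\<^sup>+ z. ennreal (hr z) * indicator ?St z \<partial>?L) = (\<integral>\<^sup>+ z. ennreal (hr z) * indicator ?St z * indicator ?OT z \<partial>lebesgue)"
      using OTs by (subst nn_integral_restrict_space) auto
    also have "\<dots> = (\<integral>\<^sup>+ z. ennreal (hr z) * indicator ?St z \<partial>lebesgue)"
      using sub by (intro nn_integral_cong) (auto simp: indicator_def)
    also have "\<dots> = (\<integral>\<^sup>+ z. ennreal (hr z) \<partial>?LS)"
      using Sts by (subst nn_integral_restrict_space) auto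
    finally have stepA: "(\<integral>\<^sup>+ z. ennreal (hr z) * indicator ?St z \<partial>?L) = (\<integral>\<^sup>+ z. ennreal (hr z) \<partial>?LS)" .
    have giS: "integrable ?LS g" and uiS: "integrable ?LS u" and fiS: "integrable ?LS f"
      using sub_int[OF Sts OTs sub] gi ui fi by auto
    have gmS: "g \<in> borel_measurable ?LS" and umS: "u \<in> borel_measurable ?LS" and fmS: "f \<in> borel_measurable ?LS"
      using giS uiS fiS by auto
    have gnnS: "AE z in ?LS. 0 \<le> g z"
      using gnn sub OTs Sts by (auto simp: AE_restrict_space_iff elim!: AE_mp)
    have int_cut: "integrable ?LS (\<lambda>z. if \<bar>u z\<bar> < k then g z else 0)" for k
      by (rule Bochner_Integration.integrable_bound[OF giS meas_cut1[OF gmS umS]]) auto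
    have int_F: "integrable ?LS (\<lambda>z. f z * trunc k (u z))" if "0 \<le> k" for k
    proof (rule Bochner_Integration.integrable_bound[where f="\<lambda>z. k * f z"])
      show "integrable ?LS (\<lambda>z. k * f z)" using fiS by simp
      show "(\<lambda>z. f z * trunc k (u z)) \<in> borel_measurable ?LS" using meas_ft[OF fmS umS that] .
      show "AE x in ?LS. norm (f x * trunc k (u x)) \<le> norm (k * f x)"
      proof (rule AE_I2)
        fix x
        have "\<bar>trunc k (u x)\<bar> \<le> k" using that by (auto simp: trunc_alt)
        then have "\<bar>f x\<bar> * \<bar>trunc k (u x)\<bar> \<le> \<bar>f x\<bar> * k" by (intro mult_left_mono) auto
        then show "norm (f x * trunc k (u x)) \<le> norm (k * f x)" using that by (simp add: abs_mult mult.commute)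
      qed
    qed
    have hr_eq: "hr z = (if \<bar>u z\<bar> < b then g z else 0) - (if \<bar>u z\<bar> < a then g z else 0)" for z
      using ab by (auto simp: hr_def)
    have hri: "integrable ?LS hr" unfolding hr_eq using int_cut by auto
    have hrnn: "AE z in ?LS. 0 \<le> hr z" using gnnS by eventually_elim (auto simp: hr_def)
    define Ik where "Ik k = integral\<^sup>L ?LS (\<lambda>z. if \<bar>u z\<bar> < k then g z else 0)" for k
    define Fk where "Fk k = integral\<^sup>L ?LS (\<lambda>z. f z * trunc k (u z))" for k
    define Ek where "Ek k = integral\<^sup>L ?LO (\<lambda>x. Gk k (u (t, x)) - Gk k (u0 x))" for k
    have EIF: "Ek k = - Ik k + Fk k" if "k \<in> {a,b}" for k
      using t(3) that unfolding P_def Ek_def Ik_def Fk_def sl_eq[OF Os] sl_eq[OF Sts] by blast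
    have hr_int: "integral\<^sup>L ?LS hr = Ik b - Ik a"
      unfolding hr_eq Ik_def by (rule Bochner_Integration.integral_diff[OF int_cut int_cut])
    have "Fk b - Fk a = integral\<^sup>L ?LS (\<lambda>z. f z * (trunc b (u z) - trunc a (u z)))"
      unfolding Fk_def using int_F ab by (subst Bochner_Integration.integral_diff[symmetric]) (auto simp: algebra_simps)
    also have "\<dots> \<le> integral\<^sup>L ?LS (\<lambda>z. (b - a) * \<bar>f z\<bar>)"
    proof (rule Bochner_Integration.integral_mono)
      show "integrable ?LS (\<lambda>z. f z * (trunc b (u z) - trunc a (u z)))"
        using int_F ab by (auto simp: algebra_simps)
      show "integrable ?LS (\<lambda>z. (b - a) * \<bar>f z\<bar>)" using fiS by auto
      fix z
      have "f z * (trunc b (u z) - trunc a (u z)) \<le> \<bar>f z\<bar> * \<bar>trunc b (u z) - trunc a (u z)\<bar>"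
        by (metis abs_ge_self abs_mult)
      also have "\<dots> \<le> \<bar>f z\<bar> * (b - a)" using trunc_diff[of a b] ab by (intro mult_left_mono) auto
      finally show "f z * (trunc b (u z) - trunc a (u z)) \<le> (b - a) * \<bar>f z\<bar>" by (simp add: mult.commute)
    qed
    also have "\<dots> = (b - a) * integral\<^sup>L ?LS (\<lambda>z. \<bar>f z\<bar>)" by simp
    also have "\<dots> \<le> (b - a) * integral\<^sup>L ?L (\<lambda>z. \<bar>f z\<bar>)"
      using ab fi by (intro mult_left_mono sub_le[OF Sts OTs sub]) auto
    finally have Fb: "Fk b - Fk a \<le> (b - a) * integral\<^sup>L ?L (\<lambda>z. \<bar>f z\<bar>)" .
    have uti': "integrable ?LO (\<lambda>x. u (t, x))" using t(3) by (simp add: P_def)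
    have iG: "integrable ?LO (\<lambda>x. Gk k (u (t, x)))" "integrable ?LO (\<lambda>x. Gk k (u0 x))" if "0 \<le> k" for k
      using int_Gk[OF uti' that] int_Gk[OF u0i that] by auto
    have "Ek a - Ek b = integral\<^sup>L ?LO (\<lambda>x. (Gk b (u0 x) - Gk a (u0 x)) - (Gk b (u (t, x)) - Gk a (u (t, x))))"
      unfolding Ek_def using iG ab by (subst Bochner_Integration.integral_diff[symmetric]) (auto simp: algebra_simps)
    also have "\<dots> \<le> integral\<^sup>L ?LO (\<lambda>x. (b - a) * \<bar>u0 x\<bar>)"
    proof (rule Bochner_Integration.integral_mono)
      show "integrable ?LO (\<lambda>x. (Gk b (u0 x) - Gk a (u0 x)) - (Gk b (u (t, x)) - Gk a (u (t, x))))"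
        using iG ab by auto
      show "integrable ?LO (\<lambda>x. (b - a) * \<bar>u0 x\<bar>)" using u0i by auto
      fix x
      show "(Gk b (u0 x) - Gk a (u0 x)) - (Gk b (u (t, x)) - Gk a (u (t, x))) \<le> (b - a) * \<bar>u0 x\<bar>"
        using Gk_diff_bound[of a b "u0 x"] Gk_diff_bound[of a b "u (t, x)"] ab by linarith
    qed
    also have "\<dots> = (b - a) * integral\<^sup>L ?LO (\<lambda>x. \<bar>u0 x\<bar>)" by simp
    finally have Eab: "Ek a - Ek b \<le> (b - a) * integral\<^sup>L ?LO (\<lambda>x. \<bar>u0 x\<bar>)" .
    have "integral\<^sup>L ?LS hr \<le> (b - a) * B"
    proof -
      have "integral\<^sup>L ?LS hr = (Fk b - Fk a) + (Ek a - Ek b)" using hr_int EIF[of a] EIF[of b] by simp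
      also have "\<dots> \<le> (b - a) * (integral\<^sup>L ?LO (\<lambda>x. \<bar>u0 x\<bar>) + integral\<^sup>L ?L (\<lambda>z. \<bar>f z\<bar>))"
        using Fb Eab by (simp add: algebra_simps)
      also have "\<dots> \<le> (b - a) * B" using Bb ab by (intro mult_left_mono) auto
      finally show ?thesis .
    qed
    moreover have "(\<integral>\<^sup>+ z. ennreal (hr z) \<partial>?LS) = ennreal (integral\<^sup>L ?LS hr)"
      by (rule nn_integral_eq_integral[OF hri hrnn])
    ultimately show "(\<integral>\<^sup>+ z. ennreal (if a \<le> \<bar>u z\<bar> \<and> \<bar>u z\<bar> < b then g z else 0) * indicator ?St z \<partial>?L) \<le> ennreal ((b - a) * B)"
      using stepA unfolding hr_def[symmetric] by (simp add: ennreal_leI)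
  qed
qed

lemma g_int:
  fixes S :: "'b::euclidean_space set" and p :: "'b \<Rightarrow> real" and D :: "'b \<Rightarrow> 'c::euclidean_space"
    and A :: "'b \<Rightarrow> 'c \<Rightarrow> 'c"
  assumes S: "S \<in> sets lebesgue" and hp: "\<And>z. z \<in> S \<Longrightarrow> 1 < p z"
    and pm: "p \<in> borel_measurable (lebesgue_on S)"
    and D: "var_Lp S p D" and AD: "var_Lp S (\<lambda>z. conj_exp (p z)) (\<lambda>z. A z (D z))"
  shows "integrable (lebesgue_on S) (\<lambda>z. A z (D z) \<bullet> D z)"
proof -
  let ?L = "lebesgue_on S"
  have [measurable]: "D \<in> borel_measurable ?L" "(\<lambda>z. A z (D z)) \<in> borel_measurable ?L"
    and f1: "(\<integral>\<^sup>+ z. ennreal (norm (D z) powr p z) \<partial>?L) < \<infinity>"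
    and f2: "(\<integral>\<^sup>+ z. ennreal (norm (A z (D z)) powr conj_exp (p z)) \<partial>?L) < \<infinity>"
    using D AD unfolding var_Lp_def nn_eq[OF S] by auto
  have [measurable]: "p \<in> borel_measurable ?L" by (rule pm)
  have [measurable]: "(\<lambda>x. conj_exp (p x)) \<in> borel_measurable ?L" unfolding conj_exp_def by measurable
  show ?thesis unfolding integrable_iff_bounded
  proof
    show "(\<lambda>z. A z (D z) \<bullet> D z) \<in> borel_measurable ?L" by measurable
    have "(\<integral>\<^sup>+ z. ennreal (norm (A z (D z) \<bullet> D z)) \<partial>?L) \<le>
       (\<integral>\<^sup>+ z. ennreal (norm (D z) powr p z) + ennreal (norm (A z (D z)) powr conj_exp (p z)) \<partial>?L)"
    proof (rule nn_integral_mono)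
      fix z assume "z \<in> space ?L"
      then have z: "z \<in> S" by (simp add: space_restrict_space)
      have "norm (A z (D z) \<bullet> D z) \<le> norm (D z) * norm (A z (D z))"
        by (metis Cauchy_Schwarz_ineq2 mult.commute real_norm_def)
      also have "\<dots> \<le> norm (D z) powr p z + norm (A z (D z)) powr conj_exp (p z)"
        unfolding conj_exp_def by (rule young_simple) (use hp[OF z] in auto)
      finally show "ennreal (norm (A z (D z) \<bullet> D z)) \<le> ennreal (norm (D z) powr p z) + ennreal (norm (A z (D z)) powr conj_exp (p z))"
        by (simp add: ennreal_plus[symmetric] del: ennreal_plus)
    qed
    also have "\<dots> = (\<integral>\<^sup>+ z. ennreal (norm (D z) powr p z) \<partial>?L) + (\<integral>\<^sup>+ z. ennreal (norm (A z (D z)) powr conj_exp (p z)) \<partial>?L)"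
      by (rule nn_integral_add) measurable
    also have "\<dots> < \<infinity>" using f1 f2 by simp
    finally show "(\<integral>\<^sup>+ z. ennreal (norm (A z (D z) \<bullet> D z)) \<partial>?L) < \<infinity>" .
  qed
qed

lemma int_from_nn:
  fixes v :: "'b::euclidean_space \<Rightarrow> real"
  assumes S: "S \<in> sets lebesgue" and m: "v \<in> borel_measurable (lebesgue_on S)"
    and b: "(\<integral>\<^sup>+ x\<in>S. ennreal \<bar>v x\<bar> \<partial>lebesgue) \<le> ennreal B"
  shows "integrable (lebesgue_on S) v"
  unfolding integrable_iff_bounded using m b unfolding nn_eq[OF S]
  by (auto simp: ennreal_less_top intro: le_less_trans)

lemma ennreal_le_max: "ennreal x \<le> ennreal y \<Longrightarrow> x \<le> max y 0"
  by (cases "y \<ge> 0") (auto simp: ennreal_le_iff2 ennreal_eq_0_iff ennreal_neg)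

theorem mainTheorem7:
  fixes \<Omega> :: "'a::euclidean_space set" and T :: real
    and p :: "real \<times> 'a \<Rightarrow> real" and A :: "real \<times> 'a \<Rightarrow> 'a \<Rightarrow> 'a"
    and f :: "nat \<Rightarrow> real \<times> 'a \<Rightarrow> real" and u0 :: "nat \<Rightarrow> 'a \<Rightarrow> real"
    and u :: "nat \<Rightarrow> real \<times> 'a \<Rightarrow> real" and Du :: "nat \<Rightarrow> real \<times> 'a \<Rightarrow> 'a"
    and Cs :: real
  assumes "standing_setting \<Omega> T p A"
    and "approx_setting \<Omega> T p A f u0 u Du"
  shows "\<exists>C :: nat \<Rightarrow> real \<Rightarrow> real. \<forall>(k::nat) \<psi> n \<epsilon> Tke.
           k > 0 \<longrightarrow> test_fun \<Omega> \<psi> \<longrightarrow> (\<forall>x. \<psi> x \<ge> 0) \<longrightarrow> 0 < \<epsilon> \<longrightarrow> \<epsilon> < 1 \<longrightarrow>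
           Tke \<in> smoothed_trunc Cs (real k) \<epsilon> \<longrightarrow>
           (\<integral>\<^sup>+ z\<in>OmegaT T \<Omega>.
              ennreal \<bar>(A z (Du n z) \<bullet> Du n z) * deriv (deriv Tke) (u n z) * \<psi> (snd z)\<bar> \<partial>lebesgue)
           \<le> ennreal (C k (W1inf_norm \<psi>))"
proof -
  note ss = assms(1)[unfolded standing_setting_def]
  note ap = assms(2)[unfolded approx_setting_def]
  let ?OT = "{0<..<T}\<times>\<Omega>"
  let ?L = "lebesgue_on ?OT"
  let ?LO = "lebesgue_on \<Omega>"
  have OTeq: "OmegaT T \<Omega> = ?OT" by (simp add: OmegaT_def)
  have Om: "open \<Omega>" and T: "T > 0" using ss by (auto simp: bounded_lipschitz_domain_def)
  have OTs: "?OT \<in> sets lebesgue" using Om by (intro open_leb open_Times) auto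
  have Os: "\<Omega> \<in> sets lebesgue" using Om by (intro open_leb)
  obtain B where B: "\<And>n. (\<integral>\<^sup>+ x\<in>\<Omega>. ennreal \<bar>u0 n x\<bar> \<partial>lebesgue) +
               (\<integral>\<^sup>+ z\<in>OmegaT T \<Omega>. ennreal \<bar>f n z\<bar> \<partial>lebesgue) \<le> ennreal B"
    using ap by blast
  define B0 where "B0 = max B 0"
  have B0: "B0 \<ge> 0" by (simp add: B0_def)
  define g where "g n z = A z (Du n z) \<bullet> Du n z" for n z
  have pm: "p \<in> borel_measurable ?L" using ss by (simp add: OTeq)
  obtain pmin pmax where pmm: "1 < pmin" "\<forall>z\<in>OmegaT T \<Omega>. pmin \<le> p z \<and> p z \<le> pmax"
    using ss by blast
  have hp: "\<And>z. z \<in> ?OT \<Longrightarrow> 1 < p z" using pmm unfolding OTeq by force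
  have gnn: "AE z in ?L. 0 \<le> g n z" for n
  proof -
    have "AE z in lebesgue. z \<in> ?OT \<longrightarrow> (\<forall>\<xi> \<eta>. (A z \<xi> - A z \<eta>) \<bullet> (\<xi> - \<eta>) \<ge> 0)"
      "AE z in lebesgue. z \<in> ?OT \<longrightarrow> A z 0 = 0" using ss by (auto simp: OTeq)
    then have "AE z in lebesgue. z \<in> ?OT \<longrightarrow> 0 \<le> g n z"
    proof eventually_elim
      case (elim z) then show ?case
        unfolding g_def by (metis diff_zero)
    qed
    then show ?thesis using OTs by (simp add: AE_restrict_space_iff)
  qed
  have key: "(\<integral>\<^sup>+ z. ennreal (if a \<le> \<bar>u n z\<bar> \<and> \<bar>u n z\<bar> < b then g n z else 0) \<partial>?L)
          \<le> ennreal ((b - a) * B0)" if ab: "0 < a" "a \<le> b" for n a b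
  proof (rule key_slab[OF T Om _ gnn _ _ _ _ _ _ ab])
    have nOT: "\<And>n. set_integrable lebesgue (OmegaT T \<Omega>) (u n)"
      and W: "\<And>n. AE t in lebesgue. t \<in> {0<..<T} \<longrightarrow> W011 \<Omega> (\<lambda>x. u n (t, x)) (\<lambda>x. Du n (t, x))"
      and VD: "\<And>n. var_Lp (OmegaT T \<Omega>) p (Du n)"
      and VA: "\<And>n. var_Lp (OmegaT T \<Omega>) (\<lambda>z. conj_exp (p z)) (\<lambda>z. A z (Du n z))"
      and En: "\<And>n. \<forall>k>0. AE t in lebesgue. t \<in> {0<..<T} \<longrightarrow>
          (LINT x:\<Omega>|lebesgue. Gk k (u n (t, x)) - Gk k (u0 n x))
          = - (LINT z:{0<..<t} \<times> \<Omega>|lebesgue.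
                  A z (Du n z) \<bullet> (if \<bar>u n z\<bar> < k then Du n z else 0))
            + (LINT z:{0<..<t} \<times> \<Omega>|lebesgue. f n z * trunc k (u n z))"
      and Lf: "\<And>n. Linf (OmegaT T \<Omega>) (f n)" and Lu0: "\<And>n. Linf \<Omega> (u0 n)"
      using ap by auto
    show "integrable ?L (g n)"
      unfolding g_def[abs_def] using g_int[OF OTs hp pm, of "Du n" A] VD[of n] VA[of n] by (simp add: OTeq)
    show "integrable ?L (u n)" using nOT OTs by (simp add: si_iff OTeq)
    have Bn: "(\<integral>\<^sup>+ x\<in>\<Omega>. ennreal \<bar>u0 n x\<bar> \<partial>lebesgue) \<le> ennreal B"
      "(\<integral>\<^sup>+ z\<in>?OT. ennreal \<bar>f n z\<bar> \<partial>lebesgue) \<le> ennreal B"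
      using B[of n] unfolding OTeq by (auto intro: order_trans[rotated] add_increasing add_increasing2)
    show fi: "integrable ?L (f n)"
      by (rule int_from_nn[OF OTs _ Bn(2)]) (use Lf in \<open>simp add: Linf_def OTeq\<close>)
    show u0i: "integrable ?LO (u0 n)"
      by (rule int_from_nn[OF Os _ Bn(1)]) (use Lu0 in \<open>simp add: Linf_def\<close>)
    have "ennreal (integral\<^sup>L ?LO (\<lambda>x. \<bar>u0 n x\<bar>) + integral\<^sup>L ?L (\<lambda>z. \<bar>f n z\<bar>))
        = (\<integral>\<^sup>+ x. ennreal \<bar>u0 n x\<bar> \<partial>?LO) + (\<integral>\<^sup>+ z. ennreal \<bar>f n z\<bar> \<partial>?L)"
      using fi u0i by (simp add: nn_integral_eq_integral ennreal_plus)
    also have "\<dots> \<le> ennreal B" using B[of n] unfolding OTeq nn_eq[OF Os] nn_eq[OF OTs] .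
    finally show "integral\<^sup>L ?LO (\<lambda>x. \<bar>u0 n x\<bar>) + integral\<^sup>L ?L (\<lambda>z. \<bar>f n z\<bar>) \<le> B0"
      unfolding B0_def by (rule ennreal_le_max)
    show "AE t in lebesgue. t \<in> {0<..<T} \<longrightarrow> integrable ?LO (\<lambda>x. u n (t, x))"
      using W[of n] by eventually_elim (auto simp: W011_def weak_grad_def si_iff[OF Os])
    fix k :: real assume "k > 0"
    have eqf: "(\<lambda>z. A z (Du n z) \<bullet> (if \<bar>u n z\<bar> < k then Du n z else 0)) = (\<lambda>z. if \<bar>u n z\<bar> < k then g n z else 0)"
      by (auto simp: g_def)
    show "AE t in lebesgue. t \<in> {0<..<T} \<longrightarrow>
          (LINT x:\<Omega>|lebesgue. Gk k (u n (t, x)) - Gk k (u0 n x))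
          = - (LINT z:{0<..<t} \<times> \<Omega>|lebesgue. (if \<bar>u n z\<bar> < k then g n z else 0))
            + (LINT z:{0<..<t} \<times> \<Omega>|lebesgue. f n z * trunc k (u n z))"
      using En[of n, rule_format, OF \<open>k > 0\<close>] by (simp only: eqf)
  qed
  have gm: "g n \<in> borel_measurable ?L" and um: "u n \<in> borel_measurable ?L" for n
  proof -
    have "set_integrable lebesgue (OmegaT T \<Omega>) (u n)" "var_Lp (OmegaT T \<Omega>) p (Du n)"
      "var_Lp (OmegaT T \<Omega>) (\<lambda>z. conj_exp (p z)) (\<lambda>z. A z (Du n z))" using ap by auto
    then have [measurable]: "u n \<in> borel_measurable ?L" "Du n \<in> borel_measurable ?L" "(\<lambda>z. A z (Du n z)) \<in> borel_measurable ?L"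
      using OTs by (auto simp: si_iff OTeq var_Lp_def)
    show "g n \<in> borel_measurable ?L" unfolding g_def[abs_def] by measurable
    show "u n \<in> borel_measurable ?L" by measurable
  qed
  show ?thesis
  proof (rule exI[of _ "\<lambda>k w. 2 * max Cs 0 * max w 0 * B0"], intro allI impI)
    fix k :: nat and \<psi> :: "'a \<Rightarrow> real" and n \<epsilon> Tke
    assume k: "k > 0" and \<psi>: "test_fun \<Omega> \<psi>" and \<psi>nn: "\<forall>x. \<psi> x \<ge> 0" and e: "0 < \<epsilon>" "\<epsilon> < 1"
      and Tk: "Tke \<in> smoothed_trunc Cs (real k) \<epsilon>"
    define M where "M = W1inf_norm \<psi>"
    have \<psi>M: "\<bar>\<psi> x\<bar> \<le> M" for x using test_fun_bounds[OF \<psi>] by (simp add: M_def)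
    have M0: "M \<ge> 0" using \<psi>M[of 0] by linarith
    have T2b: "\<bar>deriv (deriv Tke) z\<bar> \<le> Cs / \<epsilon>" for z using Tke_props(1)[OF Tk e(1)] by simp
    have Cs0: "Cs \<ge> 0" using T2b[of 0] e by (smt (verit) divide_neg_pos)
    have T2z: "deriv (deriv Tke) z = 0" if "\<bar>z\<bar> < real k \<or> \<bar>z\<bar> > real k + \<epsilon>" for z
      using Tke_props(2)[OF Tk e(1)] that by simp
    define a where "a = real k" define b where "b = real k + 2 * \<epsilon>"
    have ab: "0 < a" "a \<le> b" using k e by (auto simp: a_def b_def)
    let ?h = "\<lambda>z. if a \<le> \<bar>u n z\<bar> \<and> \<bar>u n z\<bar> < b then g n z else 0"
    have "(\<integral>\<^sup>+ z\<in>OmegaT T \<Omega>. ennreal \<bar>(A z (Du n z) \<bullet> Du n z) * deriv (deriv Tke) (u n z) * \<psi> (snd z)\<bar> \<partial>lebesgue)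
       = (\<integral>\<^sup>+ z. ennreal \<bar>g n z * deriv (deriv Tke) (u n z) * \<psi> (snd z)\<bar> \<partial>?L)"
      unfolding OTeq nn_eq[OF OTs] g_def ..
    also have "\<dots> \<le> (\<integral>\<^sup>+ z. ennreal (Cs / \<epsilon> * M) * ennreal (?h z) \<partial>?L)"
    proof (rule nn_integral_mono_AE)
      show "AE z in ?L. ennreal \<bar>g n z * deriv (deriv Tke) (u n z) * \<psi> (snd z)\<bar> \<le> ennreal (Cs / \<epsilon> * M) * ennreal (?h z)"
        using gnn[of n]
      proof eventually_elim
        case (elim z)
        have "\<bar>g n z * deriv (deriv Tke) (u n z) * \<psi> (snd z)\<bar> \<le> Cs / \<epsilon> * M * ?h z"
        proof (cases "a \<le> \<bar>u n z\<bar> \<and> \<bar>u n z\<bar> < b")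
          case True
          have "\<bar>g n z * deriv (deriv Tke) (u n z) * \<psi> (snd z)\<bar> = g n z * (\<bar>deriv (deriv Tke) (u n z)\<bar> * \<bar>\<psi> (snd z)\<bar>)"
            using elim by (simp add: abs_mult)
          also have "\<dots> \<le> g n z * (Cs / \<epsilon> * M)"
            using elim T2b \<psi>M Cs0 e by (intro mult_left_mono mult_mono) auto
          finally show ?thesis using True by (simp add: mult.commute)
        next
          case False
          then have "\<bar>u n z\<bar> < real k \<or> \<bar>u n z\<bar> > real k + \<epsilon>" using e by (auto simp: a_def b_def)
          then have "deriv (deriv Tke) (u n z) = 0" using T2z by blast
          then show ?thesis using False by (simp only: if_False)
        qed
        moreover have "0 \<le> ?h z" using elim by simp
        ultimately show ?case using Cs0 M0 e
          by (simp add: ennreal_mult[symmetric] ennreal_leI)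
      qed
    qed
    also have "\<dots> = ennreal (Cs / \<epsilon> * M) * (\<integral>\<^sup>+ z. ennreal (?h z) \<partial>?L)"
      by (rule nn_integral_cmult) (rule meas_cut2[OF gm um])
    also have "\<dots> \<le> ennreal (Cs / \<epsilon> * M) * ennreal ((b - a) * B0)"
      by (intro mult_left_mono key[OF ab]) auto
    also have "\<dots> = ennreal (Cs / \<epsilon> * M * ((b - a) * B0))"
      using Cs0 M0 e ab B0 by (simp add: ennreal_mult[symmetric])
    also have "Cs / \<epsilon> * M * ((b - a) * B0) = 2 * max Cs 0 * max M 0 * B0"
      using e Cs0 M0 by (simp add: a_def b_def field_simps)
    finally show "(\<integral>\<^sup>+ z\<in>OmegaT T \<Omega>. ennreal \<bar>(A z (Du n z) \<bullet> Du n z) * deriv (deriv Tke) (u n z) * \<psi> (snd z)\<bar> \<partial>lebesgue)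
           \<le> ennreal (2 * max Cs 0 * max (W1inf_norm \<psi>) 0 * B0)" unfolding M_def .
  qed
qed

end
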